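(* Let $p$ be a prime number, let $u \geqslant 1$ and $n \geqslant m \geqslant 1$ be integers, and let $$f(x) = a_{n}x^{n} + a_{n-1}x^{n-1} + \cdots + a_{m}x^{m} + p^{u} \in \mathbb{Z}[x]$$ with $a_n \neq 0$. Suppose that $p \nmid a_{m}$, that $\gcd(u, m) = 1$, and that $$p^{u} > |a_{n}| + |a_{n-1}| + \cdots + |a_{m}|.$$ Then $f(x)$ is irreducible over $\mathbb{Q}$. *)

theory Defs
  imports "HOL-Computational_Algebra.Computational_Algebra"
begin

end

theory Submission imports Defs "Berlekamp_Zassenhaus.Factor_Bound" begin

lemma last_min_exists:
  fixes S :: "nat set" and w :: "nat \<Rightarrow> nat"
  assumes "finite S" "S \<noteq> {}"
  shows "\<exists>k0\<in>S. (\<forall>k\<in>S. w k0 \<le> w k) \<and> (\<forall>k\<in>S. k0 < k \<longrightarrow> w k0 < w k)"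
proof -
  define G where "G = Min (w ` S)"
  define T where "T = {k\<in>S. w k = G}"
  have "G \<in> w ` S" unfolding G_def using assms by simp
  hence "T \<noteq> {}" unfolding T_def by auto
  have fT: "finite T" unfolding T_def using assms by simp
  define k0 where "k0 = Max T"
  have "k0 \<in> T" unfolding k0_def using fT \<open>T \<noteq> {}\<close> by simp
  hence k0: "k0 \<in> S" "w k0 = G" unfolding T_def by auto
  have minG: "\<forall>k\<in>S. G \<le> w k" unfolding G_def using assms by simp
  have "\<forall>k\<in>S. k0 < k \<longrightarrow> w k0 < w k"
  proof (intro ballI impI)
    fix k assume "k \<in> S" "k0 < k"
    hence "k \<notin> T" unfolding k0_def using fT Max_ge not_le by blast
    thus "w k0 < w k" using minG \<open>k \<in> S\<close> k0 unfolding T_def by force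
  qed
  thus ?thesis using k0 minG by auto
qed

lemma key_val:
  fixes g h :: "int poly" and P :: int and M U k0 l0 :: nat
  defines "v \<equiv> multiplicity P"
  assumes Pe: "prime_elem P" and M: "M > 0"
    and g0: "poly.coeff g k0 \<noteq> 0" and h0: "poly.coeff h l0 \<noteq> 0"
    and gmin: "\<And>k. poly.coeff g k \<noteq> 0 \<Longrightarrow> M * v (poly.coeff g k0) + U * k0 \<le> M * v (poly.coeff g k) + U * k"
    and gmax: "\<And>k. poly.coeff g k \<noteq> 0 \<Longrightarrow> k0 < k \<Longrightarrow> M * v (poly.coeff g k0) + U * k0 < M * v (poly.coeff g k) + U * k"
    and hmin: "\<And>k. poly.coeff h k \<noteq> 0 \<Longrightarrow> M * v (poly.coeff h l0) + U * l0 \<le> M * v (poly.coeff h k) + U * k"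
    and hmax: "\<And>k. poly.coeff h k \<noteq> 0 \<Longrightarrow> l0 < k \<Longrightarrow> M * v (poly.coeff h l0) + U * l0 < M * v (poly.coeff h k) + U * k"
  shows "poly.coeff (g * h) (k0 + l0) \<noteq> 0 \<and> v (poly.coeff (g * h) (k0 + l0)) = v (poly.coeff g k0) + v (poly.coeff h l0)"
proof -
  define N where "N = k0 + l0"
  define e where "e = v (poly.coeff g k0) + v (poly.coeff h l0)"
  have Pnu: "\<not> is_unit P" using Pe by (simp add: prime_elem_not_unit)
  define t where "t = (\<lambda>i. poly.coeff g i * poly.coeff h (N - i))"
  have sum_eq: "poly.coeff (g * h) N = t k0 + (\<Sum>i\<in>{..N} - {k0}. t i)"
    unfolding coeff_mult t_def by (subst sum.remove[of _ k0]) (auto simp: N_def)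
  have main_v: "v (t k0) = e" unfolding t_def e_def v_def N_def
    using g0 h0 Pe by (simp add: prime_elem_multiplicity_mult_distrib)
  have main_nz: "t k0 \<noteq> 0" unfolding t_def N_def using g0 h0 by simp
  have rest: "P ^ Suc e dvd t i" if i: "i \<in> {..N} - {k0}" for i
  proof (cases "poly.coeff g i = 0 \<or> poly.coeff h (N - i) = 0")
    case True thus ?thesis unfolding t_def by auto
  next
    case False
    hence gi: "poly.coeff g i \<noteq> 0" and hi: "poly.coeff h (N - i) \<noteq> 0" by auto
    have "M * (v (poly.coeff g i) + v (poly.coeff h (N - i))) + U * N > M * e + U * N"
    proof (cases "i < k0")
      case True
      hence "l0 < N - i" unfolding N_def by simp
      have eqN: "U * (N - i) + U * i = U * N" using i by (simp add: add_mult_distrib2[symmetric])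
      have eqN2: "U * k0 + U * l0 = U * N" unfolding N_def by (simp add: add_mult_distrib2)
      from hmax[OF hi \<open>l0 < N - i\<close>] gmin[OF gi] show ?thesis
        unfolding e_def add_mult_distrib2 using eqN eqN2 by linarith
    next
      case False
      hence "k0 < i" using i by auto
      have eqN: "U * (N - i) + U * i = U * N" using i by (simp add: add_mult_distrib2[symmetric])
      have eqN2: "U * k0 + U * l0 = U * N" unfolding N_def by (simp add: add_mult_distrib2)
      from gmax[OF gi \<open>k0 < i\<close>] hmin[OF hi] show ?thesis
        unfolding e_def add_mult_distrib2 using eqN eqN2 by linarith
    qed
    hence "M * e < M * (v (poly.coeff g i) + v (poly.coeff h (N - i)))" by simp
    hence lt: "Suc e \<le> v (poly.coeff g i) + v (poly.coeff h (N - i))"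
      using M by (meson mult_less_cancel1 Suc_leI)
    have "P ^ (v (poly.coeff g i) + v (poly.coeff h (N - i))) dvd t i"
      unfolding t_def power_add v_def by (intro mult_dvd_mono multiplicity_dvd)
    thus ?thesis using lt by (meson dvd_trans le_imp_power_dvd)
  qed
  have restd: "P ^ Suc e dvd (\<Sum>i\<in>{..N} - {k0}. t i)" by (rule dvd_sum) (rule rest)
  have m1: "P ^ e dvd t k0" using multiplicity_dvd[of P "t k0"] main_v unfolding v_def by simp
  have m2: "\<not> P ^ Suc e dvd t k0"
    using multiplicity_geI[OF main_nz Pnu, of "Suc e"] main_v unfolding v_def by auto
  have d1: "P ^ e dvd poly.coeff (g * h) N" unfolding sum_eq
    using m1 dvd_trans[OF le_imp_power_dvd[of e "Suc e" P] restd] by (intro dvd_add) simp_all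
  have d2: "\<not> P ^ Suc e dvd poly.coeff (g * h) N" unfolding sum_eq
    using m2 restd by (simp add: dvd_add_left_iff)
  have nz: "poly.coeff (g * h) N \<noteq> 0" using d2 by auto
  have "v (poly.coeff (g * h) N) = e" unfolding v_def by (rule multiplicity_eqI[OF d1 d2])
  thus ?thesis using nz unfolding N_def e_def by simp
qed

lemma coeff0_big:
  fixes g h :: "int poly"
  assumes dg: "degree g > 0"
    and roots: "\<And>z::complex. norm z \<le> 1 \<Longrightarrow> poly (of_int_poly (g*h)) z \<noteq> 0"
  shows "\<bar>poly.coeff g 0\<bar> > 1"
proof -
  define gc where "gc = (of_int_poly g :: complex poly)"
  have dgc: "degree gc = degree g" unfolding gc_def by simp
  obtain r where dec: "Polynomial.smult (lead_coeff gc) (\<Prod>i<degree gc. [:-r i, 1:]) = gc"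
    using complex_poly_decompose' by blast
  have rootg: "poly gc (r i) = 0" if "i < degree gc" for i
  proof -
    have "poly gc (r i) = lead_coeff gc * (\<Prod>j<degree gc. r i - r j)"
      by (subst dec[symmetric]) (simp add: poly_prod)
    also have "(\<Prod>j<degree gc. r i - r j) = 0" using that by (intro prod_zero) auto
    finally show ?thesis by simp
  qed
  have big: "norm (r i) > 1" if "i < degree gc" for i
  proof (rule ccontr)
    assume "\<not> norm (r i) > 1"
    hence "poly (of_int_poly (g*h)) (r i) \<noteq> 0" using roots by simp
    moreover have "poly (of_int_poly (g*h)) (r i) = poly gc (r i) * poly (of_int_poly h) (r i)"
      unfolding gc_def by (simp add: of_int_poly_hom.hom_mult)
    ultimately show False using rootg[OF that] by simp
  qed
  have c0: "poly.coeff gc 0 = lead_coeff gc * (\<Prod>i<degree gc. - r i)"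
    by (subst dec[symmetric]) (simp add: poly_0_coeff_0[symmetric] poly_prod)
  have "norm (poly.coeff gc 0) = norm (lead_coeff gc) * (\<Prod>i<degree gc. norm (r i))"
    unfolding c0 norm_mult prod_norm[symmetric] by simp
  moreover have "norm (lead_coeff gc) \<ge> 1"
  proof -
    have "lead_coeff g \<noteq> 0" using dg by auto
    hence "\<bar>lead_coeff g\<bar> \<ge> 1" by linarith
    moreover have "lead_coeff gc = of_int (lead_coeff g)" unfolding gc_def by (simp add: dgc[unfolded gc_def] coeff_map_poly)
    ultimately show ?thesis by (simp del: of_int_abs add: norm_of_int)
  qed
  moreover have "(\<Prod>i<degree gc. norm (r i)) > 1"
  proof -
    have "{..<degree gc} = insert 0 {1..<degree gc}" using dg dgc by auto
    hence "(\<Prod>i<degree gc. norm (r i)) = norm (r 0) * (\<Prod>i\<in>{1..<degree gc}. norm (r i))" by simp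
    moreover have "(\<Prod>i\<in>{1..<degree gc}. norm (r i)) \<ge> 1"
      by (rule prod_ge_1) (use big in \<open>fastforce\<close>)
    moreover have "norm (r 0) > 1" using big dg dgc by simp
    ultimately show ?thesis by (metis less_1_mult less_le_trans order.strict_implies_order zero_less_one mult_le_cancel_left1 not_le)
  qed
  ultimately have "norm (poly.coeff gc 0) > 1"
    by (metis less_1_mult le_less mult_cancel_right1 less_le_trans)
  moreover have "poly.coeff gc 0 = of_int (poly.coeff g 0)" unfolding gc_def by (simp add: coeff_map_poly)
  ultimately show ?thesis by (simp add: norm_of_int)
qed

hide_const (open) UnivPoly.monom

lemma test_coeff:
  fixes p u m n :: nat and a :: "nat \<Rightarrow> int" and f :: "int poly"
  assumes "m \<ge> 1" "f = (\<Sum>k = m..n. monom (a k) k) + [:int p ^ u:]"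
  shows "poly.coeff f k = (if m \<le> k \<and> k \<le> n then a k else 0) + (if k = 0 then int p ^ u else 0)"
  using assms by (auto simp: coeff_sum coeff_monom coeff_pCons split: nat.split)

lemma poly_of_int_const: "poly (map_poly (of_int::int\<Rightarrow>complex) [:c:]) z = of_int c"
  by (cases "c = 0") (simp_all add: map_poly_pCons)

lemma test_poly:
  fixes p u m n :: nat and a :: "nat \<Rightarrow> int" and f :: "int poly" and z :: complex
  assumes "f = (\<Sum>k = m..n. monom (a k) k) + [:int p ^ u:]"
  shows "poly (of_int_poly f) z = (\<Sum>k = m..n. of_int (a k) * z ^ k) + of_int (int p ^ u)"
  using assms by (simp add: of_int_poly_hom.hom_sum of_int_poly_hom.hom_add poly_sum poly_monom map_poly_monom poly_of_int_const)

lemma divisor_of_prime_power: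
  fixes P x :: int
  assumes "prime P" "x dvd P ^ u" "\<bar>x\<bar> > 1"
  shows "P dvd x"
proof -
  have "x \<noteq> 0" "\<not> is_unit x" using assms(3) by auto
  then obtain q where q: "q dvd x" "prime q" using prime_divisor_exists by blast
  hence "q dvd P ^ u" using assms(2) dvd_trans by blast
  hence "q dvd P" using q(2) prime_dvd_power by blast
  hence "q = P" using q(2) assms(1) primes_dvd_imp_eq by blast
  thus ?thesis using q by simp
qed

theorem theorem1:
  fixes p u m n :: nat and a :: "nat \<Rightarrow> int" and f :: "int poly"
  assumes "prime p"
    and "u \<ge> 1" and "m \<ge> 1" and "n \<ge> m"
    and "f = (\<Sum>k = m..n. monom (a k) k) + [:int p ^ u:]"
    and "a n \<noteq> 0"
    and "\<not> int p dvd a m"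
    and "gcd u m = 1"
    and "int p ^ u > (\<Sum>k = m..n. \<bar>a k\<bar>)"
  shows "irreducible (map_poly (of_int :: int \<Rightarrow> rat) f)"
proof -
  define P where "P = int p"
  have Pp: "prime P" unfolding P_def using assms(1) by simp
  hence Pe: "prime_elem P" using prime_imp_prime_elem by blast
  have Pnu: "\<not> is_unit P" "P \<noteq> 0" using Pe by (auto simp: prime_elem_not_unit)
  define v where "v = multiplicity P"
  have cf: "\<And>k. poly.coeff f k = (if m \<le> k \<and> k \<le> n then a k else 0) + (if k = 0 then P ^ u else 0)"
    unfolding P_def using test_coeff[OF assms(3,5)] by simp
  have roots: "poly (of_int_poly f) z \<noteq> 0" if "norm z \<le> 1" for z :: complex
  proof -
    have "norm (\<Sum>k = m..n. of_int (a k) * z ^ k) \<le> (\<Sum>k = m..n. norm (of_int (a k) * z ^ k))"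
      by (rule norm_sum)
    also have "\<dots> \<le> (\<Sum>k = m..n. of_int \<bar>a k\<bar>)"
    proof (rule sum_mono)
      fix k
      have "norm z ^ k \<le> 1" using that norm_ge_zero power_le_one by blast
      hence "\<bar>real_of_int (a k)\<bar> * norm z ^ k \<le> \<bar>real_of_int (a k)\<bar>"
        by (simp add: mult_left_le)
      thus "norm (of_int (a k) * z ^ k) \<le> of_int \<bar>a k\<bar>"
        by (simp add: norm_mult norm_power norm_of_int)
    qed
    also have "\<dots> < of_int (int p ^ u)" using assms(9)
      by (metis of_int_less_iff of_int_sum)
    finally have lt: "norm (\<Sum>k = m..n. of_int (a k) * z ^ k) < real_of_int (int p ^ u)" .
    show ?thesis
    proof
      assume "poly (of_int_poly f) z = 0"
      hence "(\<Sum>k = m..n. of_int (a k) * z ^ k) = - of_int (int p ^ u)"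
        using test_poly[OF assms(5), of z] by (simp add: eq_neg_iff_add_eq_0)
      hence "norm (\<Sum>k = m..n. of_int (a k) * (z::complex) ^ k) = real_of_int (int p ^ u)"
        by (simp only: norm_minus_cancel norm_of_int) simp
      thus False using lt by simp
    qed
  qed
  have main: False if fgh: "f = g * h" and dg: "degree g > 0" and dh: "degree h > 0" for g h
  proof -
    have b0c0: "poly.coeff g 0 * poly.coeff h 0 = P ^ u"
      using cf[of 0] assms(3) fgh by (simp add: coeff_mult_0)
    hence b0: "poly.coeff g 0 \<noteq> 0" and c0: "poly.coeff h 0 \<noteq> 0" using Pnu by auto
    have gb: "\<bar>poly.coeff g 0\<bar> > 1" using coeff0_big[OF dg] roots fgh by blast
    have hb: "\<bar>poly.coeff h 0\<bar> > 1" using coeff0_big[OF dh, of g] roots fgh by (simp add: mult.commute)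
    have Pb: "P dvd poly.coeff g 0" using divisor_of_prime_power[OF Pp _ gb] b0c0 by (metis dvd_triv_left)
    have Pc: "P dvd poly.coeff h 0" using divisor_of_prime_power[OF Pp _ hb] b0c0 by (metis dvd_triv_right)
    define s where "s = v (poly.coeff g 0)"
    define t where "t = v (poly.coeff h 0)"
    have s1: "s \<ge> 1" unfolding s_def v_def using multiplicity_geI[OF b0 Pnu(1), of 1] Pb by simp
    have t1: "t \<ge> 1" unfolding t_def v_def using multiplicity_geI[OF c0 Pnu(1), of 1] Pc by simp
    have stu: "s + t = u"
    proof -
      have "v (P ^ u) = u" unfolding v_def using Pnu by (simp add: multiplicity_same_power)
      thus ?thesis unfolding s_def t_def v_def using b0c0[symmetric] b0 c0 Pe
        by (simp add: prime_elem_multiplicity_mult_distrib v_def)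
    qed
    have am: "poly.coeff f m = a m" using cf[of m] assms(3,4) by simp
    have exg: "\<exists>k. \<not> P dvd poly.coeff g k"
    proof (rule ccontr)
      assume "\<not> ?thesis"
      hence "P dvd poly.coeff (g * h) m" unfolding coeff_mult by (auto intro!: dvd_sum)
      thus False using am fgh assms(7) P_def by simp
    qed
    have exh: "\<exists>k. \<not> P dvd poly.coeff h k"
    proof (rule ccontr)
      assume "\<not> ?thesis"
      hence "P dvd poly.coeff (g * h) m" unfolding coeff_mult by (auto intro!: dvd_sum)
      thus False using am fgh assms(7) P_def by simp
    qed
    define i where "i = (LEAST k. \<not> P dvd poly.coeff g k)"
    define j where "j = (LEAST k. \<not> P dvd poly.coeff h k)"
    have gi: "\<not> P dvd poly.coeff g i" unfolding i_def using exg LeastI_ex by metis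
    have hj: "\<not> P dvd poly.coeff h j" unfolding j_def using exh LeastI_ex by metis
    have gl: "P dvd poly.coeff g k" if "k < i" for k using that not_less_Least unfolding i_def by blast
    have hl: "P dvd poly.coeff h k" if "k < j" for k using that not_less_Least unfolding j_def by blast
    have ijm: "i + j \<le> m"
    proof (rule ccontr)
      assume "\<not> ?thesis"
      hence "P dvd poly.coeff (g * h) m" unfolding coeff_mult
      proof (intro dvd_sum)
        fix k assume "\<not> i + j \<le> m" "k \<in> {..m}"
        show "P dvd poly.coeff g k * poly.coeff h (m - k)"
        proof (cases "k < i")
          case True thus ?thesis using gl by simp
        next
          case False
          hence "m - k < j" using \<open>\<not> i + j \<le> m\<close> \<open>k \<in> {..m}\<close> by auto
          thus ?thesis using hl by simp
        qed
      qed
      thus False using am fgh assms(7) P_def by simp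
    qed
    have vgi: "v (poly.coeff g i) = 0" unfolding v_def using gi by (rule not_dvd_imp_multiplicity_0)
    have vhj: "v (poly.coeff h j) = 0" unfolding v_def using hj by (rule not_dvd_imp_multiplicity_0)
    have gi0: "poly.coeff g i \<noteq> 0" using gi by auto
    have hj0: "poly.coeff h j \<noteq> 0" using hj by auto
    define wg where "wg = (\<lambda>k. m * v (poly.coeff g k) + u * k)"
    define wh where "wh = (\<lambda>k. m * v (poly.coeff h k) + u * k)"
    have finS: "finite {k. poly.coeff g k \<noteq> 0}" "finite {k. poly.coeff h k \<noteq> 0}"
      by (auto intro: finite_subset[of _ "{..degree g}"] finite_subset[of _ "{..degree h}"] le_degree)
    obtain k0 where k0: "poly.coeff g k0 \<noteq> 0"
      "\<And>k. poly.coeff g k \<noteq> 0 \<Longrightarrow> wg k0 \<le> wg k"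
      "\<And>k. poly.coeff g k \<noteq> 0 \<Longrightarrow> k0 < k \<Longrightarrow> wg k0 < wg k"
      using last_min_exists[OF finS(1), of wg] b0 by auto
    obtain l0 where l0: "poly.coeff h l0 \<noteq> 0"
      "\<And>k. poly.coeff h k \<noteq> 0 \<Longrightarrow> wh l0 \<le> wh k"
      "\<And>k. poly.coeff h k \<noteq> 0 \<Longrightarrow> l0 < k \<Longrightarrow> wh l0 < wh k"
      using last_min_exists[OF finS(2), of wh] c0 by auto
    have kv: "poly.coeff (g * h) (k0 + l0) \<noteq> 0 \<and> v (poly.coeff (g * h) (k0 + l0)) = v (poly.coeff g k0) + v (poly.coeff h l0)"
      unfolding v_def
      by (rule key_val[OF Pe, of m]) (use assms(3) k0 l0 in \<open>auto simp: wg_def wh_def v_def\<close>)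
    define N where "N = k0 + l0"
    have fN: "poly.coeff f N \<noteq> 0" "m * v (poly.coeff f N) + u * N = wg k0 + wh l0"
      using kv fgh unfolding N_def wg_def wh_def by (auto simp: algebra_simps)
    have low: "m * u \<le> m * v (poly.coeff f N) + u * N"
    proof (cases "N = 0")
      case True
      hence "poly.coeff f N = P ^ u" using cf[of N] assms(3) by simp
      hence "v (poly.coeff f N) = u" unfolding v_def using Pnu by (simp add: multiplicity_same_power)
      thus ?thesis by simp
    next
      case False
      hence "N \<ge> m" using fN(1) cf[of N] by (cases "m \<le> N") auto
      hence "u * m \<le> u * N" by simp
      thus ?thesis by (metis mult.commute trans_le_add2)
    qed
    have G1: "wg k0 \<le> m * s" using k0(2)[OF b0] unfolding wg_def s_def by simp
    have H1: "wh l0 \<le> m * t" using l0(2)[OF c0] unfolding wh_def t_def by simp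
    have G2: "wg k0 \<le> u * i" using k0(2)[OF gi0] vgi unfolding wg_def by simp
    have H2: "wh l0 \<le> u * j" using l0(2)[OF hj0] vhj unfolding wh_def by simp
    have E1: "m * s + m * t = m * u" using stu by (simp add: add_mult_distrib2[symmetric])
    have E2: "u * i + u * j \<le> u * m" using ijm by (simp add: add_mult_distrib2[symmetric])
    have "m * u = u * m" by simp
    hence msui: "m * s = u * i" using low fN(2) G1 H1 G2 H2 E1 E2 by linarith
    have cop: "coprime m u" using assms(8) by (simp add: coprime_iff_gcd_eq_1 gcd.commute)
    have "m dvd u * i" using msui by (metis dvd_triv_left)
    hence mi: "m dvd i" using cop by (simp add: coprime_dvd_mult_right_iff)
    have "i \<le> m" using ijm by simp
    show False
    proof (cases "i = 0")
      case True thus False using msui s1 assms(3) by simp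
    next
      case False
      hence "i = m" using mi \<open>i \<le> m\<close> dvd_imp_le by fastforce
      hence "s = u" using msui assms(3) by simp
      thus False using stu t1 by simp
    qed
  qed
  have fnz: "f \<noteq> 0" using cf[of n] assms(3,4,6) by auto
  have degf: "degree f \<ge> n" using cf[of n] assms(3,4,6) by (auto intro: le_degree)
  show ?thesis
  proof (rule irreducibleI)
    show "of_int_poly f \<noteq> (0 :: rat poly)" using fnz by simp
    show "\<not> is_unit (of_int_poly f :: rat poly)"
      using degf assms(3,4) fnz by (simp add: is_unit_iff_degree)
    fix A B :: "rat poly" assume AB: "of_int_poly f = A * B"
    show "is_unit A \<or> is_unit B"
    proof (rule ccontr)
      assume nu: "\<not> ?thesis"
      have "A \<noteq> 0" "B \<noteq> 0" using AB fnz by auto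
      hence dA: "degree A > 0" and dB: "degree B > 0" using nu by (auto simp: is_unit_iff_degree)
      obtain g h where "f = g * h" "degree g = degree A" "degree h = degree B"
        using rat_to_int_factor[OF AB] by blast
      thus False using main dA dB by metis
    qed
  qed
qed

end
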